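(* For all natural numbers $n\geq 1$ and all $m\geq 2$, \[a_m(n)=a_{m-1}(2n,n).\]
   Context: For $m\geq 1$, $a_m(n)$ is the number of partitions of $n$ in which the smallest part occurs at least $m$ times, and $a_m(N,k)$ is the number of partitions of $N$ in which the smallest part occurs at least $m$ times and the largest part minus the smallest part equals $k$. *)

theory Defs
  imports Main "HOL-Library.Multiset"
begin

definition partitions :: "nat \<Rightarrow> nat multiset set" where
  "partitions n = {p. (\<forall>x\<in>#p. 0 < x) \<and> sum_mset p = n}"

definition smallest_part :: "nat multiset \<Rightarrow> nat" where
  "smallest_part p = Min (set_mset p)"

definition largest_part :: "nat multiset \<Rightarrow> nat" where
  "largest_part p = Max (set_mset p)"

definition a_m :: "nat \<Rightarrow> nat \<Rightarrow> nat" where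
  "a_m m n = card {p \<in> partitions n. p \<noteq> {#} \<and> count p (smallest_part p) \<ge> m}"

definition a_mk :: "nat \<Rightarrow> nat \<Rightarrow> nat \<Rightarrow> nat" where
  "a_mk m N k = card {p \<in> partitions N. p \<noteq> {#} \<and> count p (smallest_part p) \<ge> m
                        \<and> largest_part p - smallest_part p = k}"

end

theory Submission
  imports Defs
begin

lemma sp_props:
  assumes "p \<noteq> {#}"
  shows "smallest_part p \<in># p" "\<And>x. x \<in># p \<Longrightarrow> smallest_part p \<le> x"
        "largest_part p \<in># p" "\<And>x. x \<in># p \<Longrightarrow> x \<le> largest_part p"
  using assms by (auto simp: smallest_part_def largest_part_def)

lemma elem_le_sum: "(x::nat) \<in># p \<Longrightarrow> x \<le> sum_mset p"
  by (metis le_add1 sum_mset.remove)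

lemma forward:
  fixes n m :: nat
  assumes n: "n \<ge> 1" and m: "m \<ge> 2"
    and p: "p \<in> partitions n" "p \<noteq> {#}" "count p (smallest_part p) \<ge> m"
  defines "s \<equiv> smallest_part p"
  defines "q \<equiv> p - {#s#} + {#n + s#}"
  shows "q \<in> partitions (2*n)" "q \<noteq> {#}" "count q (smallest_part q) \<ge> m - 1"
        "largest_part q - smallest_part q = n" "smallest_part q = s"
        "q - {#largest_part q#} + {#smallest_part q#} = p"
proof -
  have sin: "s \<in># p" and sle: "\<And>x. x \<in># p \<Longrightarrow> s \<le> x" using sp_props[OF p(2)] s_def by auto
  have pos: "\<forall>x\<in>#p. 0 < x" and sum: "sum_mset p = n" using p(1) by (auto simp: partitions_def)
  have sum': "sum_mset (p - {#s#}) = n - s" using sum_mset.remove[OF sin] sum by simp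
  have spos: "s > 0" using pos sin by auto
  have cnt2: "count p s \<ge> 2" using p(3) m s_def by simp
  have sin2: "s \<in># p - {#s#}" using cnt2 by (simp add: in_diff_count)
  have bound: "\<And>x. x \<in># p - {#s#} \<Longrightarrow> x \<le> n - s" using elem_le_sum sum' by metis
  have bound2: "\<And>x. x \<in># p - {#s#} \<Longrightarrow> s \<le> x" using sle by (meson in_diffD)
  have setq: "set_mset q = insert (n+s) (set_mset (p - {#s#}))" unfolding q_def by auto
  have ns: "n + s \<noteq> s" using n by simp
  show sq: "smallest_part q = s" unfolding smallest_part_def setq
    by (rule Min_eqI) (use sin2 bound2 in auto)
  have "n - s < n + s" using spos by simp
  then have lq: "largest_part q = n + s" unfolding largest_part_def setq
    by (intro Max_eqI) (auto dest: bound)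
  show "q \<noteq> {#}" unfolding q_def by simp
  show "q \<in> partitions (2*n)" unfolding partitions_def q_def
  proof (intro CollectI conjI)
    show "\<forall>x\<in>#p - {#s#} + {#n + s#}. 0 < x" using pos spos by (auto dest: in_diffD)
    have "s \<le> n" using elem_le_sum[OF sin] sum by simp
    then show "sum_mset (p - {#s#} + {#n + s#}) = 2 * n" using sum' by simp
  qed
  have cq: "count q s = count p s - 1" unfolding q_def using ns by simp
  show "count q (smallest_part q) \<ge> m - 1" using sq cq p(3) unfolding s_def by simp
  show "largest_part q - smallest_part q = n" using sq lq by simp
  have "q - {#n+s#} + {#s#} = p" unfolding q_def using sin by simp
  then show "q - {#largest_part q#} + {#smallest_part q#} = p" by (simp only: sq lq)
qed

lemma backward:
  fixes n m :: nat
  assumes n: "n \<ge> 1" and m: "m \<ge> 2"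
    and p: "p \<in> partitions (2*n)" "p \<noteq> {#}" "count p (smallest_part p) \<ge> m - 1"
       "largest_part p - smallest_part p = n"
  defines "s \<equiv> smallest_part p"
  defines "L \<equiv> largest_part p"
  defines "q \<equiv> p - {#L#} + {#s#}"
  shows "q \<in> partitions n" "q \<noteq> {#}" "count q (smallest_part q) \<ge> m"
        "q - {#smallest_part q#} + {#n + smallest_part q#} = p"
proof -
  have sin: "s \<in># p" and sle: "\<And>x. x \<in># p \<Longrightarrow> s \<le> x"
   and Lin: "L \<in># p" using sp_props[OF p(2)] s_def L_def by auto
  have LL: "L = n + s" using p(4) sle[OF Lin] s_def L_def by simp
  have pos: "\<forall>x\<in>#p. 0 < x" and sum: "sum_mset p = 2*n" using p(1) by (auto simp: partitions_def)
  have sum': "sum_mset (p - {#L#}) = 2*n - L" using sum_mset.remove[OF Lin] sum by simp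
  have Ls: "L \<noteq> s" using LL n by simp
  have setq: "set_mset q = insert s (set_mset (p - {#L#}))" unfolding q_def by auto
  have b2: "\<And>x. x \<in># p - {#L#} \<Longrightarrow> s \<le> x" using sle by (meson in_diffD)
  have sq: "smallest_part q = s" unfolding smallest_part_def setq
    by (rule Min_eqI) (use b2 in auto)
  show "q \<noteq> {#}" unfolding q_def by simp
  show "q \<in> partitions n" unfolding partitions_def q_def
  proof (intro CollectI conjI)
    show "\<forall>x\<in>#p - {#L#} + {#s#}. 0 < x" using pos sin by (auto dest: in_diffD)
    have "L \<le> 2*n" using elem_le_sum[OF Lin] sum by simp
    then show "sum_mset (p - {#L#} + {#s#}) = n" using sum' LL by simp
  qed
  have cq: "count q s = count p s + 1" unfolding q_def using Ls by simp
  show "count q (smallest_part q) \<ge> m" using sq cq p(3) m unfolding s_def by simp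
  have "q - {#s#} + {#n + s#} = p" unfolding q_def using Lin LL by simp
  then show "q - {#smallest_part q#} + {#n + smallest_part q#} = p" by (simp only: sq)
qed

theorem proposition1p6:
  fixes n m :: nat
  assumes "n \<ge> 1" and "m \<ge> 2"
  shows "a_m m n = a_mk (m - 1) (2 * n) n"
proof -
  let ?A = "{p \<in> partitions n. p \<noteq> {#} \<and> count p (smallest_part p) \<ge> m}"
  let ?B = "{p \<in> partitions (2*n). p \<noteq> {#} \<and> count p (smallest_part p) \<ge> m - 1
                        \<and> largest_part p - smallest_part p = n}"
  let ?f = "\<lambda>p. p - {#smallest_part p#} + {#n + smallest_part p#}"
  let ?g = "\<lambda>p. p - {#largest_part p#} + {#smallest_part p#}"
  have "bij_betw ?f ?A ?B"
  proof (rule bij_betw_byWitness[where f' = ?g])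
    show "\<forall>a\<in>?A. ?g (?f a) = a" using forward[OF assms] by blast
    show "\<forall>a'\<in>?B. ?f (?g a') = a'" using backward[OF assms] by blast
    show "?f ` ?A \<subseteq> ?B" using forward[OF assms] by blast
    show "?g ` ?B \<subseteq> ?A" using backward[OF assms] by blast
  qed
  then show ?thesis unfolding a_m_def a_mk_def by (rule bij_betw_same_card)
qed

end
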